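(* For every $n\ge1$, $\alpha_{\mathrm{od}}(P_n)=\lceil n/3\rceil$, and for every $n\ge3$, $\alpha_{\mathrm{od}}(C_n)=\lceil(n-2)/3\rceil$.
   Context: $P_n$ is the path on $n$ vertices and $C_n$ the cycle on $n$ vertices. An odd independent set in $G=(V,E)$ is an independent set $S$ such that every $v\in V\setminus S$ has either no neighbor or an odd number of neighbors in $S$; $\alpha_{\mathrm{od}}(G)$ is its maximum size. *)

theory Defs
  imports Complex_Main
begin

text \<open>A finite simple graph is given by a vertex set V and a set E of 2-element
  subsets of V (its edges).\<close>

definition nbrs :: "'a set set \<Rightarrow> 'a \<Rightarrow> 'a set" where
  "nbrs E v = {u. {u, v} \<in> E}"

definition independent :: "'a set \<times> 'a set set \<Rightarrow> 'a set \<Rightarrow> bool" where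
  "independent G S \<longleftrightarrow> S \<subseteq> fst G \<and> (\<forall>u\<in>S. \<forall>v\<in>S. {u, v} \<notin> snd G)"

definition odd_independent :: "'a set \<times> 'a set set \<Rightarrow> 'a set \<Rightarrow> bool" where
  "odd_independent G S \<longleftrightarrow> independent G S \<and>
     (\<forall>v \<in> fst G - S. nbrs (snd G) v \<inter> S = {} \<or> odd (card (nbrs (snd G) v \<inter> S)))"

definition alpha_od :: "'a set \<times> 'a set set \<Rightarrow> nat" where
  "alpha_od G = Max {card S | S. odd_independent G S}"

definition path_graph :: "nat \<Rightarrow> nat set \<times> nat set set" where
  "path_graph n = ({0..<n}, {{i, i + 1} | i. i + 1 < n})"

definition cycle_graph :: "nat \<Rightarrow> nat set \<times> nat set set" where
  "cycle_graph n = ({0..<n}, {{i, (i + 1) mod n} | i. i < n})"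

end

theory Submission
  imports Defs
begin

lemma c1: "nat \<lceil>real n / 3\<rceil> = (n+2) div 3"
proof -
  obtain q r where n: "n = 3*q + r" and r: "r < 3" by (metis div_mod_decomp[of n 3] mod_less_divisor zero_less_numeral mult.commute)
  have "r = 0 \<or> r = 1 \<or> r = 2" using r by auto
  then have "\<lceil>real n / 3\<rceil> = int ((n+2) div 3)"
    by (auto simp: ceiling_eq_iff n field_simps)
  then show ?thesis by simp
qed

lemma c2: "n \<ge> 3 \<Longrightarrow> nat \<lceil>(real n - 2) / 3\<rceil> = n div 3"
proof -
  assume "n \<ge> 3"
  obtain q r where n: "n = 3*q + r" and r: "r < 3" by (metis div_mod_decomp[of n 3] mod_less_divisor zero_less_numeral mult.commute)
  have "r = 0 \<or> r = 1 \<or> r = 2" using r by auto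
  then have "\<lceil>(real n - 2) / 3\<rceil> = int (n div 3)"
    by (auto simp: ceiling_eq_iff n field_simps)
  then show ?thesis by simp
qed


lemma modsuc: "i < n \<Longrightarrow> Suc i mod n = (if Suc i = n then 0 else Suc i)"
  by (cases "Suc i = n") auto

lemma cedges: assumes "n \<ge> 3" shows "snd (cycle_graph n) = {{i, i + 1} | i. i + 1 < n} \<union> {{n-1, 0}}"
proof -
  have "{{i, (i + 1) mod n} | i. i < n} = {{i, i + 1} | i. i + 1 < n} \<union> {{n-1, 0}}"
  proof (intro equalityI subsetI)
    fix e assume "e \<in> {{i, (i + 1) mod n} | i. i < n}"
    then obtain i where "i < n" "e = {i, (i + 1) mod n}" by blast
    then show "e \<in> {{i, i + 1} | i. i + 1 < n} \<union> {{n-1, 0}}"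
      by (cases "i + 1 = n") (auto simp: modsuc)
  next
    fix e assume "e \<in> {{i, i + 1} | i. i + 1 < n} \<union> {{n-1, 0}}"
    then show "e \<in> {{i, (i + 1) mod n} | i. i < n}"
    proof
      assume "e \<in> {{i, i + 1} | i. i + 1 < n}"
      then obtain i where "i + 1 < n" "e = {i, i+1}" by blast
      then show ?thesis by (intro CollectI exI[of _ i]) (auto simp: modsuc)
    next
      assume "e \<in> {{n-1, 0}}"
      then show ?thesis using assms by (intro CollectI exI[of _ "n-1"]) (auto simp: modsuc)
    qed
  qed
  then show ?thesis unfolding cycle_graph_def by simp
qed

lemma cnbrs: "n \<ge> 3 \<Longrightarrow> nbrs (snd (cycle_graph n)) v = {u. u<n \<and> v<n \<and> (u+1 = v \<or> v+1 = u \<or> (u=0 \<and> v=n-1) \<or> (v=0 \<and> u=n-1))}"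
  unfolding nbrs_def by (auto simp: doubleton_eq_iff cedges)

lemma pnbrs: "nbrs (snd (path_graph n)) v = {u. (u+1 = v \<or> v+1 = u) \<and> u<n \<and> v<n}"
  unfolding nbrs_def path_graph_def by (auto simp: doubleton_eq_iff)


definition gap3 :: "nat set \<Rightarrow> bool" where
  "gap3 S \<longleftrightarrow> (\<forall>x\<in>S. \<forall>y\<in>S. x < y \<longrightarrow> x + 3 \<le> y)"

lemma count_gap3: "S \<subseteq> {a..<a+L} \<Longrightarrow> gap3 S \<Longrightarrow> card S \<le> (L+2) div 3"
proof (induction L arbitrary: S rule: less_induct)
  case (less L)
  show ?case
  proof (cases L)
    case 0
    then show ?thesis using less.prems by auto
  next
    case (Suc L')
    let ?t = "a + L'"
    have fin: "finite S" using less.prems(1) finite_subset by blast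
    show ?thesis
    proof (cases "?t \<in> S")
      case True
      have sub: "S - {?t} \<subseteq> {a..<a+(L'-2)}"
      proof
        fix x assume x: "x \<in> S - {?t}"
        then have "x < ?t" using less.prems(1) Suc by auto
        then have "x + 3 \<le> ?t" using less.prems(2) x True unfolding gap3_def by blast
        then show "x \<in> {a..<a+(L'-2)}" using x less.prems(1) by auto
      qed
      have g: "gap3 (S - {?t})" using less.prems(2) unfolding gap3_def by blast
      have "card (S - {?t}) \<le> (L'-2+2) div 3"
        using less.IH[OF _ sub g] Suc by simp
      moreover have "card S = card (S - {?t}) + 1" using True fin
        by (metis card_Suc_Diff1 Suc_eq_plus1)
      moreover have "(L'-2+2) div 3 + 1 \<le> (L+2) div 3" using Suc by presburger
      ultimately show ?thesis by linarith
    next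
      case False
      have sub: "S \<subseteq> {a..<a+L'}"
      proof
        fix x assume "x \<in> S"
        then have "x \<in> {a..<a+L}" "x \<noteq> ?t" using less.prems(1) False by auto
        then show "x \<in> {a..<a+L'}" using Suc by auto
      qed
      have "card S \<le> (L'+2) div 3" using less.IH[OF _ sub less.prems(2)] Suc by simp
      moreover have "(L'+2) div 3 \<le> (L+2) div 3" using Suc by (simp add: div_le_mono)
      ultimately show ?thesis by linarith
    qed
  qed
qed

lemma sub_single: "A \<subseteq> {x} \<Longrightarrow> A = {} \<or> odd (card A)"
  using subset_singletonD by fastforce

lemma amax: assumes "\<And>S. odd_independent G S \<Longrightarrow> card S \<le> k" "odd_independent G S0" "card S0 = k"
  shows "alpha_od G = k"
  unfolding alpha_od_def
proof (rule Max_eqI)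
  show "finite {card S |S. odd_independent G S}"
    by (rule finite_subset[of _ "{..k}"]) (use assms(1) in auto)
  show "\<And>y. y \<in> {card S |S. odd_independent G S} \<Longrightarrow> y \<le> k" using assms(1) by auto
  show "k \<in> {card S |S. odd_independent G S}" using assms(2,3) by auto
qed

lemma path_upper:
  assumes "odd_independent (path_graph n) S"
  shows "S \<subseteq> {0..<0+n} \<and> gap3 S"
proof
  have ind: "independent (path_graph n) S" using assms unfolding odd_independent_def by simp
  then show "S \<subseteq> {0..<0+n}" unfolding independent_def path_graph_def by auto
  show "gap3 S" unfolding gap3_def
  proof (intro ballI impI, rule ccontr)
    fix x y assume x: "x \<in> S" and y: "y \<in> S" and xy: "x < y" and ng: "\<not> x + 3 \<le> y"
    have yn: "y < n" using y ind unfolding independent_def path_graph_def by auto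
    show False
    proof (cases "y = x + 1")
      case True
      then have "{x, y} \<in> snd (path_graph n)" using yn unfolding path_graph_def by auto
      then show False using ind x y unfolding independent_def by blast
    next
      case False
      then have y2: "y = x + 2" using xy ng by linarith
      have "x + 1 \<notin> S"
      proof
        assume "x + 1 \<in> S"
        moreover have "{x, x+1} \<in> snd (path_graph n)" using yn y2 unfolding path_graph_def by auto
        ultimately show False using ind x unfolding independent_def by blast
      qed
      moreover have "x + 1 \<in> fst (path_graph n)" using yn y2 unfolding path_graph_def by auto
      ultimately have "nbrs (snd (path_graph n)) (x+1) \<inter> S = {} \<or> odd (card (nbrs (snd (path_graph n)) (x+1) \<inter> S))"
        using assms unfolding odd_independent_def by blast
      moreover have "nbrs (snd (path_graph n)) (x+1) \<inter> S = {x, y}"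
        unfolding pnbrs
      proof (intro equalityI subsetI)
        fix u assume "u \<in> {u. (u + 1 = x + 1 \<or> x + 1 + 1 = u) \<and> u < n \<and> x + 1 < n} \<inter> S"
        then show "u \<in> {x, y}" using y2 by auto
      next
        fix u assume "u \<in> {x, y}"
        then show "u \<in> {u. (u + 1 = x + 1 \<or> x + 1 + 1 = u) \<and> u < n \<and> x + 1 < n} \<inter> S"
          using x y y2 yn by auto
      qed
      ultimately show False using y2 by auto
    qed
  qed
qed


lemma cycle_upper:
  assumes n3: "n \<ge> 3" and oi: "odd_independent (cycle_graph n) S"
  shows "card S \<le> n div 3"
proof -
  have ind: "independent (cycle_graph n) S" using oi unfolding odd_independent_def by simp
  have Sn: "S \<subseteq> {0..<n}" using ind unfolding independent_def cycle_graph_def by auto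
  have fin: "finite S" using Sn finite_subset by blast
  have noedge: "{x, y} \<notin> snd (cycle_graph n)" if "x \<in> S" "y \<in> S" for x y
    using ind that unfolding independent_def by blast
  have oddc: "nbrs (snd (cycle_graph n)) v \<inter> S = {} \<or> odd (card (nbrs (snd (cycle_graph n)) v \<inter> S))"
    if "v < n" "v \<notin> S" for v
    using oi that unfolding odd_independent_def cycle_graph_def by auto
  have g: "gap3 S" unfolding gap3_def
  proof (intro ballI impI, rule ccontr)
    fix x y assume x: "x \<in> S" and y: "y \<in> S" and xy: "x < y" and ng: "\<not> x + 3 \<le> y"
    have yn: "y < n" using y Sn by auto
    show False
    proof (cases "y = x + 1")
      case True
      then have "{x, y} \<in> snd (cycle_graph n)" using yn n3 by (auto simp: cedges)
      then show False using noedge x y by blast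
    next
      case False
      then have y2: "y = x + 2" using xy ng by linarith
      have "x + 1 \<notin> S"
      proof
        assume "x + 1 \<in> S"
        moreover have "{x, x+1} \<in> snd (cycle_graph n)" using yn y2 n3 by (auto simp: cedges)
        ultimately show False using noedge x by blast
      qed
      then have "nbrs (snd (cycle_graph n)) (x+1) \<inter> S = {} \<or> odd (card (nbrs (snd (cycle_graph n)) (x+1) \<inter> S))"
        using oddc yn y2 by auto
      moreover have "nbrs (snd (cycle_graph n)) (x+1) \<inter> S = {x, y}"
        unfolding cnbrs[OF n3]
      proof (intro equalityI subsetI)
        fix u assume "u \<in> {u. u < n \<and> x + 1 < n \<and> (u + 1 = x + 1 \<or> x + 1 + 1 = u \<or> u = 0 \<and> x + 1 = n - 1 \<or> x + 1 = 0 \<and> u = n - 1)} \<inter> S"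
        then have "u = x \<or> u = y" using y2 yn by auto arith?
        then show "u \<in> {x, y}" by blast
      next
        fix u assume "u \<in> {x, y}"
        then show "u \<in> {u. u < n \<and> x + 1 < n \<and> (u + 1 = x + 1 \<or> x + 1 + 1 = u \<or> u = 0 \<and> x + 1 = n - 1 \<or> x + 1 = 0 \<and> u = n - 1)} \<inter> S"
          using x y y2 yn by (elim insertE) auto
      qed
      ultimately show False using y2 by auto
    qed
  qed
  show ?thesis
  proof (cases "card S \<le> 1")
    case True
    have "1 \<le> n div 3" using div_le_mono[OF n3, of 3] by simp
    then show ?thesis using True by linarith
  next
    case False
    then have ne: "S \<noteq> {}" by auto
    define m where "m = Min S"
    define M where "M = Max S"
    have mS: "m \<in> S" and MS: "M \<in> S" using fin ne Min_in Max_in m_def M_def by auto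
    have mle: "\<And>x. x \<in> S \<Longrightarrow> m \<le> x" unfolding m_def using fin by (simp add: Min_le)
    have Mge: "\<And>x. x \<in> S \<Longrightarrow> x \<le> M" unfolding M_def using fin by (simp add: Max_ge)
    have "m \<noteq> M"
    proof
      assume "m = M"
      have "S \<subseteq> {m}"
      proof
        fix x assume x: "x \<in> S"
        have "m \<le> x" "x \<le> M" using mle[OF x] Mge[OF x] .
        then show "x \<in> {m}" using \<open>m = M\<close> by simp
      qed
      then have "card S \<le> 1" using card_mono[of "{m}" S] by simp
      then show False using False by simp
    qed
    then have mM: "m < M" using mle[OF MS] by simp
    have Mn: "M < n" using MS Sn by auto
    have wrap: "M + 3 \<le> m + n"
    proof (rule ccontr)
      assume "\<not> M + 3 \<le> m + n"
      then consider "m = 0" "M = n - 1" | "m = 0" "M = n - 2" | "m = 1" "M = n - 1"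
        using Mn mM by linarith
      then show False
      proof cases
        case 1
        then have "{M, m} \<in> snd (cycle_graph n)" unfolding cedges[OF n3] by simp
        then show False using noedge MS mS by blast
      next
        case 2
        have v: "n - 1 \<notin> S" using Mge 2 n3 by fastforce
        have "nbrs (snd (cycle_graph n)) (n-1) \<inter> S = {m, M}"
          unfolding cnbrs[OF n3]
        proof (intro equalityI subsetI)
          fix u assume "u \<in> {u. u < n \<and> n - 1 < n \<and> (u + 1 = n - 1 \<or> n - 1 + 1 = u \<or> u = 0 \<and> n - 1 = n - 1 \<or> n - 1 = 0 \<and> u = n - 1)} \<inter> S"
          then have "u = m \<or> u = M" using 2 n3 by auto arith?
          then show "u \<in> {m, M}" by blast
        next
          fix u assume "u \<in> {m, M}"
          then show "u \<in> {u. u < n \<and> n - 1 < n \<and> (u + 1 = n - 1 \<or> n - 1 + 1 = u \<or> u = 0 \<and> n - 1 = n - 1 \<or> n - 1 = 0 \<and> u = n - 1)} \<inter> S"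
            using 2 n3 mS MS by (elim insertE) auto
        qed
        then show False using oddc[of "n-1"] v n3 2 by auto
      next
        case 3
        have v: "0 \<notin> S" using mle 3 by fastforce
        have "nbrs (snd (cycle_graph n)) 0 \<inter> S = {m, M}"
          unfolding cnbrs[OF n3]
        proof (intro equalityI subsetI)
          fix u assume "u \<in> {u. u < n \<and> 0 < n \<and> (u + 1 = 0 \<or> 0 + 1 = u \<or> u = 0 \<and> 0 = n - 1 \<or> 0 = 0 \<and> u = n - 1)} \<inter> S"
          then have "u = m \<or> u = M" using 3 n3 by auto
          then show "u \<in> {m, M}" by blast
        next
          fix u assume "u \<in> {m, M}"
          then show "u \<in> {u. u < n \<and> 0 < n \<and> (u + 1 = 0 \<or> 0 + 1 = u \<or> u = 0 \<and> 0 = n - 1 \<or> 0 = 0 \<and> u = n - 1)} \<inter> S"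
            using 3 n3 mS MS by (elim insertE) auto
        qed
        then show False using oddc[of 0] v n3 3 by auto
      qed
    qed
    have "S \<subseteq> {m..<m+(n-2)}"
    proof
      fix x assume x: "x \<in> S"
      have "m \<le> x" "x \<le> M" using mle[OF x] Mge[OF x] .
      then show "x \<in> {m..<m+(n-2)}" using wrap by simp
    qed
    from count_gap3[OF this g] show ?thesis using n3 by simp
  qed
qed


lemma path_lower:
  fixes n :: nat
  defines "S0 \<equiv> {i. i < n \<and> i mod 3 = 0}"
  shows "odd_independent (path_graph n) S0 \<and> card S0 = (n+2) div 3"
proof
  have "S0 = (\<lambda>j. 3*j) ` {..<(n+2) div 3}"
  proof (intro equalityI subsetI)
    fix x assume "x \<in> S0"
    then have "x < n" "x mod 3 = 0" unfolding S0_def by auto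
    then have "x = 3 * (x div 3)" "x div 3 < (n+2) div 3" by presburger+
    then show "x \<in> (\<lambda>j. 3*j) ` {..<(n+2) div 3}" by blast
  next
    fix x assume "x \<in> (\<lambda>j. 3*j) ` {..<(n+2) div 3}"
    then obtain j where "j < (n+2) div 3" "x = 3*j" by blast
    then have "x < n" "x mod 3 = 0" by presburger+
    then show "x \<in> S0" unfolding S0_def by simp
  qed
  moreover have "inj (\<lambda>j::nat. 3*j)" by (auto simp: inj_def)
  ultimately show "card S0 = (n+2) div 3" by (simp add: card_image inj_on_def)
  show "odd_independent (path_graph n) S0"
    unfolding odd_independent_def
  proof
    show "independent (path_graph n) S0"
      unfolding independent_def
    proof
      show "S0 \<subseteq> fst (path_graph n)" unfolding S0_def path_graph_def by auto
      show "\<forall>u\<in>S0. \<forall>v\<in>S0. {u, v} \<notin> snd (path_graph n)"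
      proof (intro ballI notI)
        fix u v assume u: "u \<in> S0" and v: "v \<in> S0" and e: "{u, v} \<in> snd (path_graph n)"
        then obtain i where "{u, v} = {i, i+1}" unfolding path_graph_def by auto
        then have d: "(u = i \<and> v = i + 1) \<or> (u = i + 1 \<and> v = i)" by (simp add: doubleton_eq_iff)
        have "u mod 3 = 0" "v mod 3 = 0" using u v unfolding S0_def by auto
        with d show False by presburger
      qed
    qed
    show "\<forall>v\<in>fst (path_graph n) - S0. nbrs (snd (path_graph n)) v \<inter> S0 = {} \<or> odd (card (nbrs (snd (path_graph n)) v \<inter> S0))"
    proof
      fix v assume v: "v \<in> fst (path_graph n) - S0"
      then have vm: "v mod 3 \<noteq> 0" "v < n" unfolding S0_def path_graph_def by auto
      have "nbrs (snd (path_graph n)) v \<inter> S0 \<subseteq> {if v mod 3 = 1 then v - 1 else v + 1}"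
        unfolding pnbrs
      proof
        fix u assume "u \<in> {u. (u + 1 = v \<or> v + 1 = u) \<and> u < n \<and> v < n} \<inter> S0"
        then have d: "u + 1 = v \<or> v + 1 = u" and um: "u mod 3 = 0" unfolding S0_def by auto
        from d show "u \<in> {if v mod 3 = 1 then v - 1 else v + 1}"
        proof
          assume a: "u + 1 = v"
          then have "v mod 3 = 1" using um by presburger
          then show ?thesis using a by auto
        next
          assume a: "v + 1 = u"
          then have "v mod 3 = 2" using um by presburger
          then show ?thesis using a by auto
        qed
      qed
      then show "nbrs (snd (path_graph n)) v \<inter> S0 = {} \<or> odd (card (nbrs (snd (path_graph n)) v \<inter> S0))"
        by (rule sub_single)
    qed
  qed
qed

lemma cycle_lower:
  fixes n :: nat
  assumes n3: "n \<ge> 3"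
  defines "S0 \<equiv> {i. i + 3 \<le> n \<and> i mod 3 = 0}"
  shows "odd_independent (cycle_graph n) S0 \<and> card S0 = n div 3"
proof
  have "S0 = (\<lambda>j. 3*j) ` {..<n div 3}"
  proof (intro equalityI subsetI)
    fix x assume "x \<in> S0"
    then have "x + 3 \<le> n" "x mod 3 = 0" unfolding S0_def by auto
    then have "x = 3 * (x div 3)" "x div 3 < n div 3" by presburger+
    then show "x \<in> (\<lambda>j. 3*j) ` {..<n div 3}" by blast
  next
    fix x assume "x \<in> (\<lambda>j. 3*j) ` {..<n div 3}"
    then obtain j where "j < n div 3" "x = 3*j" by blast
    then have "x + 3 \<le> n" "x mod 3 = 0" by presburger+
    then show "x \<in> S0" unfolding S0_def by simp
  qed
  moreover have "inj (\<lambda>j::nat. 3*j)" by (auto simp: inj_def)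
  ultimately show "card S0 = n div 3" by (simp add: card_image inj_on_def)
  show "odd_independent (cycle_graph n) S0"
    unfolding odd_independent_def
  proof
    show "independent (cycle_graph n) S0"
      unfolding independent_def
    proof
      show "S0 \<subseteq> fst (cycle_graph n)" unfolding S0_def cycle_graph_def by auto
      show "\<forall>u\<in>S0. \<forall>v\<in>S0. {u, v} \<notin> snd (cycle_graph n)"
      proof (intro ballI notI)
        fix u v assume u: "u \<in> S0" and v: "v \<in> S0" and e: "{u, v} \<in> snd (cycle_graph n)"
        have um: "u mod 3 = 0" "u + 3 \<le> n" and vm: "v mod 3 = 0" "v + 3 \<le> n" using u v unfolding S0_def by auto
        from e have "{u, v} \<in> {{i, i + 1} | i. i + 1 < n} \<or> {u, v} = {n-1, 0}" unfolding cedges[OF n3] by blast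
        then show False
        proof
          assume "{u, v} \<in> {{i, i + 1} | i. i + 1 < n}"
          then obtain i where "{u, v} = {i, i+1}" by auto
          then have d: "(u = i \<and> v = i + 1) \<or> (u = i + 1 \<and> v = i)" by (simp add: doubleton_eq_iff)
          with um(1) vm(1) show False by presburger
        next
          assume "{u, v} = {n-1, 0}"
          then have "u = n - 1 \<or> v = n - 1" by (simp add: doubleton_eq_iff) blast
          then show False
          proof
            assume "u = n - 1" then show False using um(2) n3 by linarith
          next
            assume "v = n - 1" then show False using vm(2) n3 by linarith
          qed
        qed
      qed
    qed
    show "\<forall>v\<in>fst (cycle_graph n) - S0. nbrs (snd (cycle_graph n)) v \<inter> S0 = {} \<or> odd (card (nbrs (snd (cycle_graph n)) v \<inter> S0))"
    proof
      fix v assume v: "v \<in> fst (cycle_graph n) - S0"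
      then have vS: "v \<notin> S0" and vn: "v < n" unfolding cycle_graph_def by auto
      have "nbrs (snd (cycle_graph n)) v \<inter> S0 \<subseteq> {if v = n - 1 then 0 else if v mod 3 = 1 then v - 1 else v + 1}"
        unfolding cnbrs[OF n3]
      proof
        fix u assume "u \<in> {u. u < n \<and> v < n \<and> (u + 1 = v \<or> v + 1 = u \<or> u = 0 \<and> v = n - 1 \<or> v = 0 \<and> u = n - 1)} \<inter> S0"
        then have H: "u + 1 = v \<or> v + 1 = u \<or> u = 0 \<and> v = n - 1 \<or> v = 0 \<and> u = n - 1" and
           u3: "u + 3 \<le> n" and um: "u mod 3 = 0" and un: "u < n" unfolding S0_def by auto
        from H show "u \<in> {if v = n - 1 then 0 else if v mod 3 = 1 then v - 1 else v + 1}"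
        proof (elim disjE conjE)
          assume a: "u + 1 = v"
          then have "v \<noteq> n - 1" using u3 by linarith
          moreover have "v mod 3 = 1" using a um by presburger
          ultimately show ?thesis using a by auto
        next
          assume a: "v + 1 = u"
          then have "v \<noteq> n - 1" using un by linarith
          moreover have "v mod 3 = 2" using a um by presburger
          ultimately show ?thesis using a by auto
        next
          assume "u = 0" "v = n - 1" then show ?thesis by simp
        next
          assume "v = 0" "u = n - 1" then show ?thesis using u3 n3 by linarith
        qed
      qed
      then show "nbrs (snd (cycle_graph n)) v \<inter> S0 = {} \<or> odd (card (nbrs (snd (cycle_graph n)) v \<inter> S0))"
        by (rule sub_single)
    qed
  qed
qed

theorem proposition7:
  shows "(\<forall>n::nat. n \<ge> 1 \<longrightarrow> alpha_od (path_graph n) = nat \<lceil>real n / 3\<rceil>) \<and>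
         (\<forall>n::nat. n \<ge> 3 \<longrightarrow> alpha_od (cycle_graph n) = nat \<lceil>(real n - 2) / 3\<rceil>)"
proof (intro conjI allI impI)
  fix n :: nat assume "n \<ge> 1"
  have "alpha_od (path_graph n) = (n+2) div 3"
  proof (rule amax)
    fix S assume "odd_independent (path_graph n) S"
    then have "S \<subseteq> {0..<0+n}" "gap3 S" using path_upper by blast+
    then show "card S \<le> (n+2) div 3" by (rule count_gap3)
  next
    show "odd_independent (path_graph n) {i. i < n \<and> i mod 3 = 0}"
      "card {i. i < n \<and> i mod 3 = 0} = (n+2) div 3" using path_lower by blast+
  qed
  then show "alpha_od (path_graph n) = nat \<lceil>real n / 3\<rceil>" by (simp add: c1)
next
  fix n :: nat assume n3: "n \<ge> 3"
  have "alpha_od (cycle_graph n) = n div 3"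
  proof (rule amax)
    fix S assume "odd_independent (cycle_graph n) S"
    then show "card S \<le> n div 3" using cycle_upper n3 by blast
  next
    show "odd_independent (cycle_graph n) {i. i + 3 \<le> n \<and> i mod 3 = 0}"
      "card {i. i + 3 \<le> n \<and> i mod 3 = 0} = n div 3" using cycle_lower[OF n3] by blast+
  qed
  then show "alpha_od (cycle_graph n) = nat \<lceil>(real n - 2) / 3\<rceil>" by (simp add: c2 n3)
qed
end
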